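(* Let $U$ be a countably infinite universe and $\mathcal{C}=(L_1,L_2,\ldots)$ a countably infinite collection of languages over $U$, and let $\mathcal{C}(L_i)$ and $m^\star(L_i)$ be as determined by the Procedure in the context. For every $i\ge1$, $\mathcal{C}(L_i)$ is either empty, or contains at least one entry $L_j\ne L_i$ with $j<i$; furthermore, every entry $L_j\ne L_i$ of $\mathcal{C}(L_i)$ satisfies $m^\star(L_j)<m^\star(L_i)$.
   Context: A language is an infinite subset of $U$; a collection is a sequence of languages (repetitions allowed, entries distinguished by index). Procedure. Set $\mathcal{C}'_0=()$. For $i=1,2,3,\ldots$: append the entry $L_i$ at the end of $\mathcal{C}'_{i-1}$ to get $\mathcal{C}'_i=(L'_1,\ldots,L'_i)$ (a permutation of the entries $L_1,\ldots,L_i$), and set $j=i$. Repeat: (1) among all subcollections $\mathcal{D}$ of the entries $(L'_1,\ldots,L'_j)$ that include the entry $L'_j$ and satisfy $|\bigcap_{L\in\mathcal{D}}L|<\infty$, let $\mathcal{C}_{\mathrm{chk}}$ be one maximizing $|\bigcap_{L\in\mathcal{D}}L|$ and $m_{\mathrm{chk}}$ this maximum; if no such $\mathcal{D}$ exists, set $\mathcal{C}_{\mathrm{chk}}=()$, $m_{\mathrm{chk}}=0$. (2) If $j\le1$ or $m_{\mathrm{chk}}>m^\star(L'_{j-1})$ (already fixed since $L'_{j-1}$ has original index $<i$), stop the loop. (3) Otherwise swap positions $j-1$ and $j$ in $\mathcal{C}'_i$, set $j\leftarrow j-1$ and return to (1). When the loop stops, set $\mathcal{C}(L_i)=\mathcal{C}_{\mathrm{chk}}$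 and $m^\star(L_i)=m_{\mathrm{chk}}$. *)

theory Defs
  imports Main "HOL-Library.Countable_Set"
begin

text \<open>Entries of the collection are identified by their (1-based) index; the current
ordering C'_i is a list of indices. L :: nat => 'a set gives the language of each index.\<close>

definition cands :: "(nat \<Rightarrow> 'a set) \<Rightarrow> nat list \<Rightarrow> nat \<Rightarrow> nat set set" where
  "cands L xs j = {D. D \<subseteq> set (take j xs) \<and> xs ! (j - 1) \<in> D \<and> finite (\<Inter>k\<in>D. L k)}"

definition mchk :: "(nat \<Rightarrow> 'a set) \<Rightarrow> nat list \<Rightarrow> nat \<Rightarrow> nat" where
  "mchk L xs j = (if cands L xs j = {} then 0
     else Max ((\<lambda>D. card (\<Inter>k\<in>D. L k)) ` cands L xs j))"

text \<open>Ties are broken by an arbitrary selection function sel (any maximizer may be chosen).\<close>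
definition Cchk :: "(nat set set \<Rightarrow> nat set) \<Rightarrow> (nat \<Rightarrow> 'a set) \<Rightarrow> nat list \<Rightarrow> nat \<Rightarrow> nat set" where
  "Cchk sel L xs j = (if cands L xs j = {} then {}
     else sel {D \<in> cands L xs j. card (\<Inter>k\<in>D. L k) = mchk L xs j})"

definition swap_pos :: "nat list \<Rightarrow> nat \<Rightarrow> nat \<Rightarrow> nat list" where
  "swap_pos xs a b = xs[a := xs ! b, b := xs ! a]"

text \<open>The inner loop, with j the (1-based) current position of the new entry and
ms the already fixed values m* of earlier entries.\<close>
fun bubble :: "(nat set set \<Rightarrow> nat set) \<Rightarrow> (nat \<Rightarrow> 'a set) \<Rightarrow> (nat \<Rightarrow> nat)
      \<Rightarrow> nat list \<Rightarrow> nat \<Rightarrow> nat list \<times> nat set \<times> nat" where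
  "bubble sel L ms xs j =
     (if j \<le> 1 \<or> mchk L xs j > ms (xs ! (j - 2))
      then (xs, Cchk sel L xs j, mchk L xs j)
      else bubble sel L ms (swap_pos xs (j - 2) (j - 1)) (j - 1))"

text \<open>State after processing L_1..L_n: ordering, the map C(.), the map m*(.).\<close>
fun run :: "(nat set set \<Rightarrow> nat set) \<Rightarrow> (nat \<Rightarrow> 'a set) \<Rightarrow> nat
      \<Rightarrow> nat list \<times> (nat \<Rightarrow> nat set) \<times> (nat \<Rightarrow> nat)" where
  "run sel L 0 = ([], (\<lambda>_. {}), (\<lambda>_. 0))"
| "run sel L (Suc n) =
     (let (xs, C, m) = run sel L n;
          (xs', c, mm) = bubble sel L m (xs @ [Suc n]) (Suc n)
      in (xs', C(Suc n := c), m(Suc n := mm)))"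

definition procC :: "(nat set set \<Rightarrow> nat set) \<Rightarrow> (nat \<Rightarrow> 'a set) \<Rightarrow> nat \<Rightarrow> nat set" where
  "procC sel L i = fst (snd (run sel L i)) i"

definition procM :: "(nat set set \<Rightarrow> nat set) \<Rightarrow> (nat \<Rightarrow> 'a set) \<Rightarrow> nat \<Rightarrow> nat" where
  "procM sel L i = snd (snd (run sel L i)) i"

end

theory Submission imports Defs begin

definition cs :: "(nat \<Rightarrow> 'a set) \<Rightarrow> nat set \<Rightarrow> nat \<Rightarrow> nat set set" where
  "cs L S i = {D. D \<subseteq> insert i S \<and> i \<in> D \<and> finite (\<Inter>k\<in>D. L k)}"

definition F :: "(nat \<Rightarrow> 'a set) \<Rightarrow> nat set \<Rightarrow> nat \<Rightarrow> nat" where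
  "F L S i = (if cs L S i = {} then 0 else Max ((\<lambda>D. card (\<Inter>k\<in>D. L k)) ` cs L S i))"

lemma cands_eq: "cands L (ys @ i # zs) (Suc (length ys)) = cs L (set ys) i"
  unfolding cands_def cs_def by (simp add: nth_append)

lemma mchk_eq: "mchk L (ys @ i # zs) (Suc (length ys)) = F L (set ys) i"
  unfolding mchk_def F_def cands_eq ..

lemma Cchk_eq: "Cchk sel L (ys @ i # zs) (Suc (length ys)) =
   (if cs L (set ys) i = {} then {} else sel {D \<in> cs L (set ys) i. card (\<Inter>k\<in>D. L k) = F L (set ys) i})"
  unfolding Cchk_def cands_eq mchk_eq ..

lemma cs_finite: "finite S \<Longrightarrow> finite (cs L S i)"
  unfolding cs_def by (rule finite_subset[of _ "Pow (insert i S)"]) auto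

lemma F_mono: "S \<subseteq> T \<Longrightarrow> finite T \<Longrightarrow> F L S i \<le> F L T i"
proof -
  assume a: "S \<subseteq> T" "finite T"
  have sub: "cs L S i \<subseteq> cs L T i" using a(1) unfolding cs_def by auto
  show ?thesis
  proof (cases "cs L S i = {}")
    case True then show ?thesis by (simp add: F_def)
  next
    case False
    then have "cs L T i \<noteq> {}" using sub by auto
    then show ?thesis using False sub cs_finite[OF a(2)] unfolding F_def
      by (auto intro!: Max_mono image_mono)
  qed
qed

lemma sorted_last: "sorted (map f ys) \<Longrightarrow> x \<in> set ys \<Longrightarrow> f x \<le> f (last ys)"
  by (induction ys) (auto simp: last_in_set)

lemma swap_eq: "swap_pos (ys @ [y] @ i # zs) (length ys) (Suc (length ys)) = ys @ i # y # zs"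
  unfolding swap_pos_def by (simp add: nth_append list_update_append)

declare bubble.simps[simp del]

lemma bubble_char:
  "bubble sel L ms xs j = (xs', c, mm) \<Longrightarrow> xs = ys @ i # zs \<Longrightarrow> j = Suc (length ys)
   \<Longrightarrow> sorted (map ms ys) \<Longrightarrow>
  \<exists>ys1 ys2. ys = ys1 @ ys2 \<and> xs' = ys1 @ i # ys2 @ zs
    \<and> c = Cchk sel L xs' (Suc (length ys1)) \<and> mm = mchk L xs' (Suc (length ys1))
    \<and> (\<forall>x\<in>set ys1. ms x < mm) \<and> (\<forall>y\<in>set ys2. mm \<le> ms y)"
proof (induction sel L ms xs j arbitrary: ys zs xs' c mm rule: bubble.induct)
  case (1 sel L ms xs j)
  show ?case
  proof (cases "j \<le> 1 \<or> mchk L xs j > ms (xs ! (j - 2))")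
    case True
    then have "bubble sel L ms xs j = (xs, Cchk sel L xs j, mchk L xs j)"
      by (simp del: bubble.simps add: bubble.simps[of sel L ms xs j])
    then have e: "xs' = xs" "c = Cchk sel L xs j" "mm = mchk L xs j"
      using 1(2) by auto
    have "\<forall>x\<in>set ys. ms x < mm"
    proof (cases "ys = []")
      case False
      then have "j \<ge> 2" using 1(4) by (cases ys) auto
      then have "mm > ms (xs ! (j - 2))" using True e by auto
      moreover have "xs ! (j - 2) = last ys" using False 1(3,4)
        by (simp add: nth_append last_conv_nth)
      ultimately show ?thesis using sorted_last[OF 1(5)] by (metis le_less_trans)
    qed simp
    note ylt = this
    show ?thesis
      apply (rule exI[of _ ys])
      apply (rule exI[of _ "[]"])
      using ylt e 1(3,4) by simp
  next
    case False
    then have ne: "ys \<noteq> []" using 1(3,4) by auto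
    then obtain ys' y where ys: "ys = ys' @ [y]" by (metis rev_exhaust)
    have xj: "xs ! (j - 2) = y" using 1(3,4) ys by (simp add: nth_append)
    have le: "mchk L xs j \<le> ms y" using False xj by auto
    have sw: "swap_pos xs (j - 2) (j - 1) = ys' @ i # (y # zs)"
      using swap_eq[of ys' y i zs] 1(3,4) ys by simp
    have bs: "bubble sel L ms xs j = bubble sel L ms (swap_pos xs (j - 2) (j - 1)) (j - 1)"
      by (subst bubble.simps) (use False in simp)
    have rec: "bubble sel L ms (swap_pos xs (j - 2) (j - 1)) (j - 1) = (xs', c, mm)"
      using 1(2) unfolding bs .
    have jl: "j - 1 = Suc (length ys')" using 1(4) ys by simp
    have "sorted (map ms ys')" using 1(5) ys by (simp add: sorted_append)
    from "1.IH"[OF False rec sw jl this]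
    obtain ys1 ys2 where h: "ys' = ys1 @ ys2" "xs' = ys1 @ i # ys2 @ y # zs"
      "c = Cchk sel L xs' (Suc (length ys1))" "mm = mchk L xs' (Suc (length ys1))"
      "\<forall>x\<in>set ys1. ms x < mm" "\<forall>y\<in>set ys2. mm \<le> ms y" by auto
    have "mm = F L (set ys1) i" using h(2,4) mchk_eq by simp
    also have "\<dots> \<le> F L (set ys) i" by (rule F_mono) (auto simp: ys h(1))
    also have "\<dots> = mchk L xs j" using mchk_eq[of L ys i zs] 1(3,4) by simp
    finally have "mm \<le> ms y" using le by simp
    note mmy = this
    show ?thesis
      apply (rule exI[of _ ys1])
      apply (rule exI[of _ "ys2 @ [y]"])
      using mmy h ys by auto
  qed
qed


lemma run_Suc:
  assumes "run sel L n = (xs, C, m)" "bubble sel L m (xs @ [Suc n]) (Suc n) = (xs', c, mm)"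
  shows "run sel L (Suc n) = (xs', C(Suc n := c), m(Suc n := mm))"
  using assms by simp

lemma run_m_stable: "1 \<le> k \<Longrightarrow> k \<le> n \<Longrightarrow> snd (snd (run sel L n)) k = procM sel L k"
proof (induction n)
  case 0 then show ?case by simp
next
  case (Suc n)
  obtain xs C m where r: "run sel L n = (xs, C, m)" by (cases "run sel L n") auto
  obtain xs' c mm where b: "bubble sel L m (xs @ [Suc n]) (Suc n) = (xs', c, mm)"
    by (cases "bubble sel L m (xs @ [Suc n]) (Suc n)") auto
  note rs = run_Suc[OF r b]
  show ?case
  proof (cases "k = Suc n")
    case True then show ?thesis by (simp add: procM_def)
  next
    case False
    then have "k \<le> n" using Suc by simp
    then show ?thesis using Suc.IH Suc.prems False r rs by simp
  qed
qed

lemma run_inv: "run sel L n = (xs, C, m) \<Longrightarrow>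
   length xs = n \<and> set xs \<subseteq> {1..n} \<and> sorted (map m xs)"
proof (induction n arbitrary: xs C m)
  case 0 then show ?case by simp
next
  case (Suc n)
  obtain xs0 C0 m0 where r: "run sel L n = (xs0, C0, m0)" by (cases "run sel L n") auto
  obtain xs' c mm where b: "bubble sel L m0 (xs0 @ [Suc n]) (Suc n) = (xs', c, mm)"
    by (cases "bubble sel L m0 (xs0 @ [Suc n]) (Suc n)") auto
  note rs = run_Suc[OF r b]
  have ih: "length xs0 = n" "set xs0 \<subseteq> {1..n}" "sorted (map m0 xs0)" using Suc.IH[OF r] by auto
  have bc: "\<exists>ys1 ys2. xs0 = ys1 @ ys2 \<and> xs' = ys1 @ Suc n # ys2 @ []
    \<and> c = Cchk sel L xs' (Suc (length ys1)) \<and> mm = mchk L xs' (Suc (length ys1))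
    \<and> (\<forall>x\<in>set ys1. m0 x < mm) \<and> (\<forall>y\<in>set ys2. mm \<le> m0 y)"
    by (rule bubble_char[OF b]) (simp_all add: ih)
  then obtain ys1 ys2 where h: "xs0 = ys1 @ ys2" "xs' = ys1 @ Suc n # ys2"
    "\<forall>x\<in>set ys1. m0 x < mm" "\<forall>y\<in>set ys2. mm \<le> m0 y" by auto
  have e: "xs = xs'" "m = m0(Suc n := mm)" using rs Suc.prems by auto
  have nin: "Suc n \<notin> set xs0" using ih by auto
  have m1: "map m ys1 = map m0 ys1" "map m ys2 = map m0 ys2" using nin h(1) e(2) by auto
  have s12: "sorted (map m0 ys1)" "sorted (map m0 ys2)" using ih(3) h(1) by (auto simp: sorted_append)
  have x12: "\<forall>x\<in>set (map m0 ys1). \<forall>y\<in>set (mm # map m0 ys2). x \<le> y"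
  proof (intro ballI)
    fix x y assume xy: "x \<in> set (map m0 ys1)" "y \<in> set (mm # map m0 ys2)"
    have "x < mm" using xy(1) h(3) by auto
    moreover have "mm \<le> y" using xy(2) h(4) by auto
    ultimately show "x \<le> y" by simp
  qed
  have mx: "map m xs = map m0 ys1 @ mm # map m0 ys2" using e h(2) m1 by simp
  have s2: "sorted (mm # map m0 ys2)" using s12(2) h(4) by simp
  have "sorted (map m0 ys1 @ mm # map m0 ys2)"
    using s12(1) s2 x12 by (simp only: sorted_append)
  then have "sorted (map m xs)" using mx by simp
  moreover have "length xs = Suc n" using e h ih by simp
  moreover have "set xs \<subseteq> {1..Suc n}" using e h(1,2) ih(2) by auto
  ultimately show ?case by simp
qed

theorem mainTheorem10:
  fixes U :: "'a set" and L :: "nat \<Rightarrow> 'a set" and sel :: "nat set set \<Rightarrow> nat set"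
    and i :: nat
  assumes "countable U" and "infinite U"
    and "\<forall>k\<ge>1. L k \<subseteq> U \<and> infinite (L k)"
    and "\<forall>S. S \<noteq> {} \<longrightarrow> sel S \<in> S"
    and "i \<ge> 1"
  shows "(procC sel L i = {} \<or> (\<exists>j\<in>procC sel L i. j \<noteq> i \<and> j < i))
         \<and> (\<forall>j\<in>procC sel L i. j \<noteq> i \<longrightarrow> procM sel L j < procM sel L i)"
proof -
  obtain n where i: "i = Suc n" using assms(5) by (cases i) auto
  obtain xs0 C0 m0 where r: "run sel L n = (xs0, C0, m0)" by (cases "run sel L n") auto
  obtain xs' c mm where b: "bubble sel L m0 (xs0 @ [Suc n]) (Suc n) = (xs', c, mm)"
    by (cases "bubble sel L m0 (xs0 @ [Suc n]) (Suc n)") auto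
  note rs = run_Suc[OF r b]
  have ih: "length xs0 = n" "set xs0 \<subseteq> {1..n}" "sorted (map m0 xs0)" using run_inv[OF r] by auto
  have bc: "\<exists>ys1 ys2. xs0 = ys1 @ ys2 \<and> xs' = ys1 @ Suc n # ys2 @ []
    \<and> c = Cchk sel L xs' (Suc (length ys1)) \<and> mm = mchk L xs' (Suc (length ys1))
    \<and> (\<forall>x\<in>set ys1. m0 x < mm) \<and> (\<forall>y\<in>set ys2. mm \<le> m0 y)"
    by (rule bubble_char[OF b]) (simp_all add: ih)
  then obtain ys1 ys2 where h: "xs0 = ys1 @ ys2" "xs' = ys1 @ Suc n # ys2"
    "c = Cchk sel L xs' (Suc (length ys1))" "mm = mchk L xs' (Suc (length ys1))"
    "\<forall>x\<in>set ys1. m0 x < mm" "\<forall>y\<in>set ys2. mm \<le> m0 y" by auto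
  have pc: "procC sel L i = c" and pm: "procM sel L i = mm"
    using rs i by (auto simp: procC_def procM_def)
  have c_eq: "c = (if cs L (set ys1) i = {} then {}
      else sel {D \<in> cs L (set ys1) i. card (\<Inter>k\<in>D. L k) = F L (set ys1) i})"
    using h(2,3) Cchk_eq[of sel L ys1 i ys2] i by simp
  have mm_eq: "mm = F L (set ys1) i" using h(2,4) mchk_eq[of L ys1 i ys2] i by simp
  have fin1: "finite (set ys1)" by simp
  show ?thesis
  proof (cases "cs L (set ys1) i = {}")
    case True
    then show ?thesis using c_eq pc by simp
  next
    case False
    let ?f = "\<lambda>D. card (\<Inter>k\<in>D. L k)"
    have "F L (set ys1) i \<in> ?f ` cs L (set ys1) i"
      using False by (simp add: F_def, intro Max_in finite_imageI cs_finite[OF fin1]) auto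
    then have Qne: "{D \<in> cs L (set ys1) i. ?f D = F L (set ys1) i} \<noteq> {}" by auto
    have "c = sel {D \<in> cs L (set ys1) i. ?f D = F L (set ys1) i}" using c_eq False by simp
    then have "c \<in> {D \<in> cs L (set ys1) i. ?f D = F L (set ys1) i}"
      using assms(4)[rule_format, OF Qne] by simp
    then have "c \<in> cs L (set ys1) i" by simp
    then have cp: "c \<subseteq> insert i (set ys1)" "i \<in> c" "finite (\<Inter>k\<in>c. L k)"
      unfolding cs_def by auto
    have "c \<noteq> {i}" using cp(3) assms(3,5) by auto
    then obtain j where j: "j \<in> c" "j \<noteq> i" using cp(2) by blast
    then have "j \<in> set ys1" using cp(1) by auto
    then have "j < i" using ih(2) h(1) i by auto
    have part2: "\<forall>j\<in>c. j \<noteq> i \<longrightarrow> procM sel L j < procM sel L i"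
    proof (intro ballI impI)
      fix j assume "j \<in> c" "j \<noteq> i"
      then have jy: "j \<in> set ys1" using cp(1) by auto
      then have "1 \<le> j" "j \<le> n" using ih(2) h(1) by auto
      then have "m0 j = procM sel L j" using run_m_stable[of j n sel L] r by simp
      then show "procM sel L j < procM sel L i" using h(5) jy pm by auto
    qed
    show ?thesis using pc part2 j \<open>j < i\<close> by auto
  qed
qed

end
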